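(* Consider problem (P) under Assumptions (A1)–(A3) and run the SMIL algorithm with tolerance $\varepsilon\ge 0$. Then at every iteration $k$ at which the algorithm has not terminated, the backtracking loop (step S4) is executed only finitely many times: after finitely many reductions $\Delta_k\leftarrow\kappa\Delta_k$, either the algorithm terminates at step S3 or the sufficient decrease condition $a_k\ge\varrho\Psi_k$ holds, so that the trial point $x^{k+1}$ is accepted.
   Context: Problem (P): minimize $f(x)$ subject to $x\in\mathcal{X}:=\bar{\mathcal{X}}\cap\{x\in\mathbb{R}^n : x_i\in\mathbb{Z}\ \forall i\in\mathcal{I}\}$, with $\bar{\mathcal{X}}\subseteq\mathbb{R}^n$ a closed convex polyhedral set, $\mathcal{I}\subseteq\{1,\dots,n\}$, $\mathcal{X}\ne\emptyset$, $f:\mathbb{R}^n\to\mathbb{R}$. Write $x=(u,z)$ with $u$ the components with indices not in $\mathcal{I}$ and $z$ those in $\mathcal{I}$. Assumptions: (A1) $f$ is $C^1$ with locally Lipschitz gradient; (A2) $f(u,z)=f_1(u)+\langle f_2,z\rangle$; (A3) the feasible integer parts $\{z:(u,z)\in\mathcal{X}\}$ form a bounded set. $\|x\|_{PL}$ is the $\ell_1$- or $\ell_\infty$-norm of the components with indices not in $\mathcal{I}$; $\mathbb{B}_{PL}(x,\Delta):=\{w:\|w-x\|_{PL}\le\Delta\}$. SMIL algorithm. Input $x^0\in\mathcal{X}$, $\varepsilon\ge0$; parameters $\Delta_0>0$, $\varrho,\kappa\in(0,1)$, $\kappa_m\in(0,1]$. Set $m_0:=f(x^0)$. For $k=0,1,2,\dots$: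 (S1) compute $x^{k+1}\in\arg\min\{\langle\nabla f(x^k),x\rangle : x\in\mathcal{X}\cap\mathbb{B}_{PL}(x^k,\Delta_k)\}$; (S2) set $a_k:=m_k-f(x^{k+1})$ and $\Psi_k:=\langle\nabla f(x^k),x^k-x^{k+1}\rangle$; (S3) if $\Psi_k\le\varepsilon$, return $x^k$; (S4) if $a_k<\varrho\Psi_k$, set $\Delta_k\leftarrow\kappa\Delta_k$ and go back to (S1) (backtracking); (S5) set $m_{k+1}:=(1-\kappa_m)m_k+\kappa_m f(x^{k+1})$; (S6) choose $\Delta_{k+1}$ either by the rule $\Delta_{k+1}=\kappa\Delta_k$ if $\rho_k<\varrho_1$, $\Delta_{k+1}=\Delta_k$ if $\varrho_1\le\rho_k<\varrho_2$, $\Delta_{k+1}=\Delta_k/\kappa$ if $\rho_k\ge\varrho_2$, where $\rho_k:=a_k/\Psi_k$ and $\varrho\le\varrho_1<\varrho_2<1$; or by a reset $\Delta_{k+1}\in[\Delta_{\min},\Delta_{\max}]$ with $0<\Delta_{\min}\le\Delta_{\max}$. *)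

theory Defs
  imports "HOL-Analysis.Analysis"
begin

text \<open>Vectors live in real^'n; the index set I (of type 'n set) marks the integer
  components z, the remaining components form the continuous part u.\<close>

definition feasible_set :: "(real^'n) set \<Rightarrow> 'n set \<Rightarrow> (real^'n) set" where
  "feasible_set Xbar I = Xbar \<inter> {x. \<forall>i\<in>I. x $ i \<in> \<int>}"

definition pl_norm :: "bool \<Rightarrow> 'n::finite set \<Rightarrow> real^'n \<Rightarrow> real" where
  "pl_norm use_l1 I x =
     (if use_l1 then (\<Sum>i\<in>UNIV - I. \<bar>x $ i\<bar>)
      else Max (insert 0 ((\<lambda>i. \<bar>x $ i\<bar>) ` (UNIV - I))))"

definition pl_ball :: "bool \<Rightarrow> 'n::finite set \<Rightarrow> real^'n \<Rightarrow> real \<Rightarrow> (real^'n) set" where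
  "pl_ball use_l1 I x \<Delta> = {w. pl_norm use_l1 I (w - x) \<le> \<Delta>}"

definition smil_argmin ::
  "(real^'n \<Rightarrow> real^'n) \<Rightarrow> (real^'n) set \<Rightarrow> bool \<Rightarrow> 'n::finite set \<Rightarrow> real^'n \<Rightarrow> real \<Rightarrow> (real^'n) set" where
  "smil_argmin g X use_l1 I x \<Delta> =
     {y \<in> X \<inter> pl_ball use_l1 I x \<Delta>. \<forall>w \<in> X \<inter> pl_ball use_l1 I x \<Delta>. g x \<bullet> y \<le> g x \<bullet> w}"

definition smil_assumptions ::
  "(real^'n \<Rightarrow> real) \<Rightarrow> (real^'n \<Rightarrow> real^'n) \<Rightarrow> (real^'n) set \<Rightarrow> 'n::finite set \<Rightarrow> bool" where
  "smil_assumptions f g Xbar I \<longleftrightarrow>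
     polyhedron Xbar \<and> feasible_set Xbar I \<noteq> {} \<and>
     \<comment> \<open>(A1): f is differentiable with gradient g, and g is locally Lipschitz\<close>
     (\<forall>x. (f has_derivative (\<lambda>h. g x \<bullet> h)) (at x)) \<and>
     (\<forall>x. \<exists>\<delta>>0. \<exists>L. \<forall>y\<in>ball x \<delta>. \<forall>w\<in>ball x \<delta>. norm (g y - g w) \<le> L * dist y w) \<and>
     \<comment> \<open>(A2): f(u,z) = f1(u) + <f2, z>\<close>
     (\<exists>f1 :: real^'n \<Rightarrow> real. \<exists>f2 :: real^'n.
        (\<forall>x y. (\<forall>i\<in>UNIV - I. x $ i = y $ i) \<longrightarrow> f1 x = f1 y) \<and>
        (\<forall>x. f x = f1 x + (\<Sum>i\<in>I. f2 $ i * x $ i))) \<and>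
     \<comment> \<open>(A3): the integer parts of feasible points form a bounded set\<close>
     bounded ((\<lambda>x. \<chi> i. if i \<in> I then x $ i else 0) ` feasible_set Xbar I)"

definition smil_params ::
  "real \<Rightarrow> real \<Rightarrow> real \<Rightarrow> real \<Rightarrow> real \<Rightarrow> real \<Rightarrow> real \<Rightarrow> real \<Rightarrow> real \<Rightarrow> bool" where
  "smil_params \<epsilon> \<Delta>0 \<rho> \<kappa> \<kappa>m \<rho>1 \<rho>2 \<Delta>min \<Delta>max \<longleftrightarrow>
     \<epsilon> \<ge> 0 \<and> \<Delta>0 > 0 \<and> 0 < \<rho> \<and> \<rho> < 1 \<and> 0 < \<kappa> \<and> \<kappa> < 1 \<and> 0 < \<kappa>m \<and> \<kappa>m \<le> 1 \<and>
     \<rho> \<le> \<rho>1 \<and> \<rho>1 < \<rho>2 \<and> \<rho>2 < 1 \<and> 0 < \<Delta>min \<and> \<Delta>min \<le> \<Delta>max"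

text \<open>A run of SMIL that has completed iterations 0,...,k-1 without terminating.
  x i = x^i, m i = m_i, D i = trial radius Delta_i at the start of iteration i,
  J i = number of backtracking reductions in iteration i, so that the accepted radius is
  D i * kappa^(J i).  For each rejected radius a computed trial point is recorded to exist
  (it failed (S3) and failed the sufficient decrease test of (S4)).\<close>
definition smil_run ::
  "(real^'n \<Rightarrow> real) \<Rightarrow> (real^'n \<Rightarrow> real^'n) \<Rightarrow> (real^'n) set \<Rightarrow> 'n::finite set \<Rightarrow> bool \<Rightarrow>
   real \<Rightarrow> real \<Rightarrow> real \<Rightarrow> real \<Rightarrow> real \<Rightarrow> real \<Rightarrow> real \<Rightarrow> real \<Rightarrow> real \<Rightarrow> real^'n \<Rightarrow>
   (nat \<Rightarrow> real^'n) \<Rightarrow> (nat \<Rightarrow> real) \<Rightarrow> (nat \<Rightarrow> real) \<Rightarrow> (nat \<Rightarrow> nat) \<Rightarrow> nat \<Rightarrow> bool" where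
  "smil_run f g Xbar I use_l1 \<epsilon> \<Delta>0 \<rho> \<kappa> \<kappa>m \<rho>1 \<rho>2 \<Delta>min \<Delta>max x0 x m D J k \<longleftrightarrow>
     (let X = feasible_set Xbar I;
          AM = smil_argmin g X use_l1 I;
          \<Psi> = (\<lambda>i y. g (x i) \<bullet> (x i - y));
          a = (\<lambda>i y. m i - f y)
      in x0 \<in> X \<and> x 0 = x0 \<and> m 0 = f x0 \<and> D 0 = \<Delta>0 \<and>
         (\<forall>i<k.
            (\<forall>j<J i. \<exists>y \<in> AM (x i) (D i * \<kappa> ^ j). \<Psi> i y > \<epsilon> \<and> a i y < \<rho> * \<Psi> i y) \<and>
            x (Suc i) \<in> AM (x i) (D i * \<kappa> ^ J i) \<and>
            \<Psi> i (x (Suc i)) > \<epsilon> \<and> a i (x (Suc i)) \<ge> \<rho> * \<Psi> i (x (Suc i)) \<and>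
            m (Suc i) = (1 - \<kappa>m) * m i + \<kappa>m * f (x (Suc i)) \<and>
            (let \<Delta> = D i * \<kappa> ^ J i; rk = a i (x (Suc i)) / \<Psi> i (x (Suc i)) in
               (rk < \<rho>1 \<and> D (Suc i) = \<kappa> * \<Delta>) \<or>
               (\<rho>1 \<le> rk \<and> rk < \<rho>2 \<and> D (Suc i) = \<Delta>) \<or>
               (rk \<ge> \<rho>2 \<and> D (Suc i) = \<Delta> / \<kappa>) \<or>
               (\<Delta>min \<le> D (Suc i) \<and> D (Suc i) \<le> \<Delta>max))))"

end

theory Submission
  imports Defs
begin


lemma pl_cong: "(\<And>i. i \<notin> I \<Longrightarrow> v $ i = w $ i) \<Longrightarrow> pl_norm b I v = pl_norm b I w"
  unfolding pl_norm_def by (auto intro!: sum.cong arg_cong[where f=Max] image_cong)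

lemma pl_nonneg: "pl_norm b I v \<ge> 0"
  unfolding pl_norm_def by (auto intro: sum_nonneg Max_ge)

lemma pl_zero: "pl_norm b I 0 = 0"
proof -
  have "insert 0 ((\<lambda>x. 0::real) ` (UNIV - I)) = {0}" by auto
  then show ?thesis unfolding pl_norm_def by (auto intro!: Max_eqI)
qed

lemma pl_scale:
  assumes "t \<ge> 0" shows "pl_norm b I (t *\<^sub>R v) = t * pl_norm b I v"
proof (cases b)
  case True then show ?thesis unfolding pl_norm_def
    using assms by (simp add: sum_distrib_left abs_mult)
next
  case False
  have m: "mono ((*) t)" using assms by (simp add: mono_def mult_left_mono)
  have "t * Max (insert 0 ((\<lambda>i. \<bar>v $ i\<bar>) ` (UNIV - I))) =
        Max ((*) t ` insert 0 ((\<lambda>i. \<bar>v $ i\<bar>) ` (UNIV - I)))"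
    by (rule mono_Max_commute[OF m]) auto
  also have "(*) t ` insert 0 ((\<lambda>i. \<bar>v $ i\<bar>) ` (UNIV - I)) = insert 0 ((\<lambda>i. \<bar>(t *\<^sub>R v) $ i\<bar>) ` (UNIV - I))"
    using assms by (auto simp: abs_mult image_image)
  finally show ?thesis using False unfolding pl_norm_def by simp
qed

lemma norm_pl:
  fixes v :: "real^'n::finite"
  assumes "\<And>i. i \<in> I \<Longrightarrow> v $ i = 0"
  shows "norm v \<le> real CARD('n) * pl_norm b I v"
proof -
  have "norm v \<le> (\<Sum>i\<in>UNIV. \<bar>v $ i\<bar>)" by (rule norm_le_l1_cart)
  also have "\<dots> = (\<Sum>i\<in>UNIV - I. \<bar>v $ i\<bar>)"
    using assms by (intro sum.mono_neutral_right) auto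
  also have "\<dots> \<le> real CARD('n) * pl_norm b I v"
  proof (cases b)
    case True
    have "CARD('n) \<ge> 1" by (simp add: Suc_leI)
    then have "1 * pl_norm b I v \<le> real CARD('n) * pl_norm b I v"
      using pl_nonneg[of b I v] by (intro mult_right_mono) auto
    then show ?thesis using True unfolding pl_norm_def by simp
  next
    case False
    have "(\<Sum>i\<in>UNIV - I. \<bar>v $ i\<bar>) \<le> real (card (UNIV - I)) * pl_norm b I v"
      using False unfolding pl_norm_def by (intro sum_bounded_above) auto
    also have "\<dots> \<le> real CARD('n) * pl_norm b I v"
      using pl_nonneg[of b I v] by (intro mult_right_mono) (auto simp: card_mono)
    finally show ?thesis .
  qed
  finally show ?thesis .
qed

lemma finite_int_bounded:
  fixes S :: "(real^'n::finite) set"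
  assumes "bounded S" "\<And>v i. v \<in> S \<Longrightarrow> v $ i \<in> \<int>"
  shows "finite S"
proof -
  obtain B where B: "\<And>v. v \<in> S \<Longrightarrow> norm v \<le> B" using assms(1) bounded_iff by blast
  define N where "N = \<lceil>B\<rceil>"
  have fin: "finite (Pi UNIV (\<lambda>_::'n. {-N..N}))"
    using finite_PiE[of UNIV "\<lambda>_::'n. {-N..N}"] by (simp add: PiE_UNIV_domain)
  have "S \<subseteq> (\<lambda>h. \<chi> i. real_of_int (h i)) ` Pi UNIV (\<lambda>_. {-N..N})"
  proof
    fix v assume v: "v \<in> S"
    have "\<forall>i. \<exists>t. v $ i = real_of_int t" using assms(2)[OF v] Ints_cases by metis
    then obtain h where h: "\<And>i. v $ i = real_of_int (h i)" by metis
    have "\<bar>v $ i\<bar> \<le> B" for i using component_le_norm_cart[of v i] B[OF v] by linarith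
    have "h i \<in> {-N..N}" for i
    proof -
      have a: "\<bar>real_of_int (h i)\<bar> \<le> B" using \<open>\<bar>v $ i\<bar> \<le> B\<close> h[of i] by simp
      have c: "B \<le> real_of_int N" unfolding N_def by (rule le_of_int_ceiling)
      have "real_of_int (h i) \<le> real_of_int N" "real_of_int (-N) \<le> real_of_int (h i)"
        using a c by (auto simp: abs_le_iff)
      then show ?thesis by simp
    qed
    moreover have "v = (\<chi> i. real_of_int (h i))" by (simp add: vec_eq_iff h)
    ultimately show "v \<in> (\<lambda>h. \<chi> i. real_of_int (h i)) ` Pi UNIV (\<lambda>_. {-N..N})" by blast
  qed
  then show ?thesis using fin finite_subset by blast
qed



lemma run_inv:
  assumes P: "smil_params \<epsilon> \<Delta>0 \<rho> \<kappa> \<kappa>m \<rho>1 \<rho>2 \<Delta>min \<Delta>max"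
    and R: "smil_run f g Xbar I use_l1 \<epsilon> \<Delta>0 \<rho> \<kappa> \<kappa>m \<rho>1 \<rho>2 \<Delta>min \<Delta>max x0 x m D J k"
  shows "i \<le> k \<Longrightarrow> x i \<in> feasible_set Xbar I \<and> f (x i) \<le> m i \<and> D i > 0"
proof (induction i)
  case 0
  then show ?case using R P unfolding smil_run_def smil_params_def Let_def by auto
next
  case (Suc i)
  then have IH: "x i \<in> feasible_set Xbar I \<and> f (x i) \<le> m i \<and> D i > 0" and ik: "i < k" by auto
  from R ik have st:
    "x (Suc i) \<in> smil_argmin g (feasible_set Xbar I) use_l1 I (x i) (D i * \<kappa> ^ J i)"
    "g (x i) \<bullet> (x i - x (Suc i)) > \<epsilon>"
    "m i - f (x (Suc i)) \<ge> \<rho> * (g (x i) \<bullet> (x i - x (Suc i)))"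
    "m (Suc i) = (1 - \<kappa>m) * m i + \<kappa>m * f (x (Suc i))"
    "(let \<Delta> = D i * \<kappa> ^ J i; rk = (m i - f (x (Suc i))) / (g (x i) \<bullet> (x i - x (Suc i))) in
               (rk < \<rho>1 \<and> D (Suc i) = \<kappa> * \<Delta>) \<or>
               (\<rho>1 \<le> rk \<and> rk < \<rho>2 \<and> D (Suc i) = \<Delta>) \<or>
               (rk \<ge> \<rho>2 \<and> D (Suc i) = \<Delta> / \<kappa>) \<or>
               (\<Delta>min \<le> D (Suc i) \<and> D (Suc i) \<le> \<Delta>max))"
    unfolding smil_run_def Let_def by auto
  have pp: "\<epsilon> \<ge> 0" "0 < \<rho>" "0 < \<kappa>" "\<kappa> < 1" "0 < \<kappa>m" "\<kappa>m \<le> 1" "0 < \<Delta>min"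
    using P unfolding smil_params_def by auto
  have "x (Suc i) \<in> feasible_set Xbar I" using st(1) unfolding smil_argmin_def by auto
  moreover have "f (x (Suc i)) \<le> m (Suc i)"
  proof -
    have "0 \<le> \<rho> * (g (x i) \<bullet> (x i - x (Suc i)))" using st(2) pp by auto
    then have "0 \<le> m i - f (x (Suc i))" using st(3) by linarith
    then have "0 \<le> (1 - \<kappa>m) * (m i - f (x (Suc i)))" using pp by auto
    then show ?thesis using st(4) by (simp add: algebra_simps)
  qed
  moreover have "D (Suc i) > 0"
  proof -
    have "D i * \<kappa> ^ J i > 0" using IH pp by auto
    then show ?thesis using st(5) pp unfolding Let_def by auto
  qed
  ultimately show ?case by blast
qed

lemma grad_int:
  fixes f :: "real^'n::finite \<Rightarrow> real" and g :: "real^'n \<Rightarrow> real^'n"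
  assumes d: "(f has_derivative (\<lambda>h. g x \<bullet> h)) (at x)"
    and f1: "\<forall>x y. (\<forall>i\<in>UNIV - I. x $ i = y $ i) \<longrightarrow> f1 x = f1 y"
    and f2: "\<forall>x. f x = f1 x + (\<Sum>i\<in>I. f2 $ i * x $ i)"
    and i: "i \<in> I"
  shows "g x $ i = f2 $ i"
proof -
  define e :: "real^'n" where "e = axis i 1"
  have l: "((\<lambda>t::real. x + t *\<^sub>R e) has_derivative (\<lambda>s. s *\<^sub>R e)) (at 0)"
    by (auto intro!: derivative_eq_intros)
  have d0: "(f has_derivative (\<lambda>h. g x \<bullet> h)) (at ((\<lambda>t::real. x + t *\<^sub>R e) 0))"
    using d by simp
  have A: "((f \<circ> (\<lambda>t. x + t *\<^sub>R e)) has_derivative ((\<lambda>h. g x \<bullet> h) \<circ> (\<lambda>s. s *\<^sub>R e))) (at 0)"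
    by (rule diff_chain_at[OF l d0])
  have eq: "(f \<circ> (\<lambda>t. x + t *\<^sub>R e)) = (\<lambda>t. f x + t * f2 $ i)"
  proof
    fix t
    have "f1 (x + t *\<^sub>R e) = f1 x" using f1 i unfolding e_def
      by (intro f1[rule_format]) (auto simp: axis_def)
    moreover have "(\<Sum>l\<in>I. f2 $ l * (x + t *\<^sub>R e) $ l) = (\<Sum>l\<in>I. f2 $ l * x $ l) + t * f2 $ i"
    proof -
      have "(\<Sum>l\<in>I. f2 $ l * (x + t *\<^sub>R e) $ l) = (\<Sum>l\<in>I. f2 $ l * x $ l + (if l = i then t * f2 $ i else 0))"
        unfolding e_def by (intro sum.cong) (auto simp: axis_def algebra_simps)
      also have "\<dots> = (\<Sum>l\<in>I. f2 $ l * x $ l) + t * f2 $ i"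
        using i by (simp add: sum.distrib)
      finally show ?thesis .
    qed
    ultimately show "(f \<circ> (\<lambda>t. x + t *\<^sub>R e)) t = f x + t * f2 $ i" using f2 by simp
  qed
  have B: "((\<lambda>t. f x + t * f2 $ i) has_derivative (\<lambda>s. s * f2 $ i)) (at 0)"
    by (auto intro!: derivative_eq_intros)
  have "((\<lambda>h. g x \<bullet> h) \<circ> (\<lambda>s. s *\<^sub>R e)) = (\<lambda>s. s * f2 $ i)"
    using has_derivative_unique[OF A[unfolded eq] B] .
  then have "g x \<bullet> (1 *\<^sub>R e) = 1 * f2 $ i" by (metis comp_apply)
  then show ?thesis unfolding e_def by (simp add: inner_axis)
qed



theorem mainTheorem4:
  fixes f :: "real^'n::finite \<Rightarrow> real" and g :: "real^'n \<Rightarrow> real^'n"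
    and Xbar :: "(real^'n) set" and I :: "'n set" and use_l1 :: bool
    and \<epsilon> \<Delta>0 \<rho> \<kappa> \<kappa>m \<rho>1 \<rho>2 \<Delta>min \<Delta>max :: real and x0 :: "real^'n"
    and x :: "nat \<Rightarrow> real^'n" and m D :: "nat \<Rightarrow> real" and J :: "nat \<Rightarrow> nat" and k :: nat
    and y :: "nat \<Rightarrow> real^'n"
  assumes "smil_assumptions f g Xbar I"
    and "smil_params \<epsilon> \<Delta>0 \<rho> \<kappa> \<kappa>m \<rho>1 \<rho>2 \<Delta>min \<Delta>max"
    and "smil_run f g Xbar I use_l1 \<epsilon> \<Delta>0 \<rho> \<kappa> \<kappa>m \<rho>1 \<rho>2 \<Delta>min \<Delta>max x0 x m D J k"
    and "\<And>j. y j \<in> smil_argmin g (feasible_set Xbar I) use_l1 I (x k) (D k * \<kappa> ^ j)"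
  shows "\<exists>j. g (x k) \<bullet> (x k - y j) \<le> \<epsilon> \<or> m k - f (y j) \<ge> \<rho> * (g (x k) \<bullet> (x k - y j))"
proof (rule ccontr)
  assume "\<not> ?thesis"
  then have H: "\<And>j. g (x k) \<bullet> (x k - y j) > \<epsilon>" "\<And>j. m k - f (y j) < \<rho> * (g (x k) \<bullet> (x k - y j))"
    by (auto simp: not_le)
  define X where "X = feasible_set Xbar I"
  define xk where "xk = x k"
  define G where "G = g xk"
  define Dl where "Dl = (\<lambda>j. D k * \<kappa> ^ j)"
  define \<Psi> where "\<Psi> = (\<lambda>j. G \<bullet> (xk - y j))"
  define C where "C = real CARD('n)"
  have Cpos: "C > 0" unfolding C_def by simp
  have pp: "\<epsilon> \<ge> 0" "0 < \<rho>" "\<rho> < 1" "0 < \<kappa>" "\<kappa> < 1"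
    using assms(2) unfolding smil_params_def by auto
  have inv: "xk \<in> X" "f xk \<le> m k" "D k > 0"
    using run_inv[OF assms(2,3), of k] unfolding X_def xk_def by auto
  obtain f1 f2 where f1: "\<forall>x y. (\<forall>i\<in>UNIV - I. x $ i = y $ i) \<longrightarrow> f1 x = f1 y"
    and f2: "\<forall>x. f x = f1 x + (\<Sum>i\<in>I. f2 $ i * x $ i)"
    using assms(1) unfolding smil_assumptions_def by blast
  have poly: "polyhedron Xbar" and der: "(f has_derivative (\<lambda>h. G \<bullet> h)) (at xk)"
    and bdd: "bounded ((\<lambda>x. \<chi> i. if i \<in> I then x $ i else 0) ` X)"
    using assms(1) unfolding smil_assumptions_def G_def X_def by auto
  have Gi: "\<And>i. i \<in> I \<Longrightarrow> G $ i = f2 $ i"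
    unfolding G_def by (rule grad_int[OF _ f1 f2]) (use assms(1) in \<open>auto simp: smil_assumptions_def\<close>)
  have H1: "\<And>j. \<Psi> j > \<epsilon>" and H2: "\<And>j. m k - f (y j) < \<rho> * \<Psi> j"
    using H unfolding \<Psi>_def G_def xk_def by auto
  have yX: "\<And>j. y j \<in> X" and ypl: "\<And>j. pl_norm use_l1 I (y j - xk) \<le> Dl j"
    and yopt: "\<And>j w. w \<in> X \<Longrightarrow> pl_norm use_l1 I (w - xk) \<le> Dl j \<Longrightarrow> G \<bullet> y j \<le> G \<bullet> w"
    using assms(4) unfolding smil_argmin_def pl_ball_def X_def xk_def G_def Dl_def by auto
  have Dlpos: "\<And>j. Dl j > 0" unfolding Dl_def using inv pp by auto
  have small: "\<exists>n. \<forall>j\<ge>n. Dl j < e" if e: "e > 0" for e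
  proof -
    obtain n where n: "\<kappa> ^ n < e / D k" using real_arch_pow_inv[of "e / D k" \<kappa>] e inv pp by auto
    have "Dl j < e" if "j \<ge> n" for j
    proof -
      have "\<kappa> ^ j \<le> \<kappa> ^ n" using that pp by (intro power_decreasing) auto
      then have "\<kappa> ^ j < e / D k" using n by linarith
      then show ?thesis unfolding Dl_def using inv by (simp add: field_simps)
    qed
    then show ?thesis by blast
  qed
  define zp where "zp = (\<lambda>v::real^'n. \<chi> i. if i \<in> I then v $ i else 0)"
  have fin: "finite (zp ` range y)"
  proof (rule finite_int_bounded)
    show "bounded (zp ` range y)"
    proof (rule bounded_subset[OF bdd])
      show "zp ` range y \<subseteq> (\<lambda>x. \<chi> i. if i \<in> I then x $ i else 0) ` X"
        using yX unfolding zp_def by blast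
    qed
    show "v $ i \<in> \<int>" if "v \<in> zp ` range y" for v i
      using that yX unfolding zp_def X_def feasible_set_def by auto
  qed
  obtain js where "infinite {a. zp (y a) = zp (y js)}"
    using pigeonhole_infinite[of "UNIV :: nat set" "\<lambda>j. zp (y j)"] fin by (auto simp: image_image)
  then have unb: "\<And>N. \<exists>j\<ge>N. zp (y j) = zp (y js)"
    using infinite_nat_iff_unbounded_le by auto
  define p where "p = (\<chi> i. if i \<in> I then y js $ i else xk $ i)"
  have zpI: "y j $ i = p $ i" if "zp (y j) = zp (y js)" "i \<in> I" for j i
  proof -
    have "zp (y j) $ i = zp (y js) $ i" using that by simp
    then show ?thesis using that(2) unfolding zp_def p_def by simp
  qed
  have normyp: "norm (y j - p) \<le> C * Dl j" if "zp (y j) = zp (y js)" for j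
  proof -
    have "norm (y j - p) \<le> C * pl_norm use_l1 I (y j - p)"
      unfolding C_def by (rule norm_pl) (use zpI[OF that] in auto)
    also have "pl_norm use_l1 I (y j - p) = pl_norm use_l1 I (y j - xk)"
      by (rule pl_cong) (simp add: p_def)
    finally show ?thesis using ypl[of j] Cpos by (meson mult_left_mono less_imp_le order_trans)
  qed
  have pXbar: "p \<in> Xbar"
  proof -
    have "\<exists>z\<in>Xbar. dist z p < e" if e: "e > 0" for e
    proof -
      obtain n where n: "\<And>j. j \<ge> n \<Longrightarrow> Dl j < e / C" using small[of "e / C"] e Cpos by auto
      obtain j where j: "j \<ge> n" "zp (y j) = zp (y js)" using unb by blast
      have "dist (y j) p \<le> C * Dl j" using normyp[OF j(2)] by (simp add: dist_norm)
      also have "\<dots> < e" using n[OF j(1)] Cpos by (simp add: field_simps)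
      finally show ?thesis using yX[of j] unfolding X_def feasible_set_def by auto
    qed
    then show ?thesis using closed_approachable[OF polyhedron_imp_closed[OF poly]] by blast
  qed
  have pX: "p \<in> X"
    using pXbar yX[of js] unfolding X_def feasible_set_def p_def by auto
  have plp: "pl_norm use_l1 I (p - xk) = 0"
    using pl_cong[of I "p - xk" 0 use_l1] pl_zero by (simp add: p_def)
  define c where "c = G \<bullet> (xk - p)"
  have Psic: "\<Psi> j \<ge> c" for j
    using yopt[OF pX, of j] plp Dlpos[of j] unfolding \<Psi>_def c_def by (simp add: inner_diff_right)
  have cnn: "c \<ge> 0"
  proof (rule ccontr)
    assume "\<not> c \<ge> 0"
    then have cneg: "c < 0" by simp
    define K where "K = norm G * C + 1"
    have Kpos: "K > 0" unfolding K_def using Cpos by (simp add: add_nonneg_pos)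
    have "(- c) / K > 0" using cneg Kpos by (simp add: divide_neg_pos)
    then obtain n where n: "\<And>j. j \<ge> n \<Longrightarrow> Dl j < (- c) / K" using small by blast
    obtain j where j: "j \<ge> n" "zp (y j) = zp (y js)" using unb by blast
    have "\<Psi> j = c + G \<bullet> (p - y j)" unfolding \<Psi>_def c_def by (simp add: inner_diff_right)
    also have "G \<bullet> (p - y j) \<le> norm G * norm (p - y j)" by (rule norm_cauchy_schwarz)
    also have "norm (p - y j) \<le> C * Dl j" using normyp[OF j(2)] by (simp add: norm_minus_commute)
    finally have "\<Psi> j \<le> c + norm G * (C * Dl j)" by (simp add: mult_left_mono)
    also have "norm G * (C * Dl j) \<le> K * Dl j"
      unfolding K_def using Dlpos[of j] by (simp add: algebra_simps)
    also have "K * Dl j < - c" using n[OF j(1)] Kpos by (simp add: field_simps)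
    finally have "\<Psi> j < 0" by simp
    then show False using H1[of j] pp by simp
  qed
  define \<sigma> where "\<sigma> = \<Psi> js / Dl js"
  have \<sigma>pos: "\<sigma> > 0" unfolding \<sigma>_def using H1[of js] pp Dlpos[of js] by auto
  have scale: "\<Psi> j \<ge> \<sigma> * Dl j" if jj: "j \<ge> js" for j
  proof -
    define t where "t = \<kappa> ^ (j - js)"
    have t: "0 < t" "t \<le> 1" unfolding t_def using pp by (auto simp: power_le_one)
    have tD: "t * Dl js = Dl j"
      unfolding t_def Dl_def using jj by (simp add: power_add[symmetric] algebra_simps)
    define w where "w = (1 - t) *\<^sub>R p + t *\<^sub>R y js"
    have wXbar: "w \<in> Xbar"
      unfolding w_def using polyhedron_imp_convex[OF poly] pXbar yX[of js] t
      unfolding convex_def X_def feasible_set_def by auto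
    have wi: "w $ i = p $ i" if "i \<in> I" for i
      using zpI[of js i] that unfolding w_def by (simp add: algebra_simps)
    have wX: "w \<in> X" using wXbar pX wi unfolding X_def feasible_set_def by auto
    have "pl_norm use_l1 I (w - xk) = pl_norm use_l1 I (t *\<^sub>R (y js - xk))"
      by (rule pl_cong) (simp add: w_def p_def algebra_simps)
    also have "\<dots> = t * pl_norm use_l1 I (y js - xk)" using t by (simp add: pl_scale)
    also have "\<dots> \<le> t * Dl js" using ypl[of js] t by (simp add: mult_left_mono)
    finally have wpl: "pl_norm use_l1 I (w - xk) \<le> Dl j" using tD by simp
    have "G \<bullet> y j \<le> G \<bullet> w" by (rule yopt[OF wX wpl])
    then have "\<Psi> j \<ge> G \<bullet> (xk - w)" unfolding \<Psi>_def by (simp add: inner_diff_right)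
    also have "G \<bullet> (xk - w) = (1 - t) * c + t * \<Psi> js"
      unfolding w_def c_def \<Psi>_def by (simp add: inner_diff_right inner_add_right algebra_simps)
    finally have "\<Psi> j \<ge> (1 - t) * c + t * \<Psi> js" .
    moreover have "(1 - t) * c \<ge> 0" using t cnn by simp
    moreover have "t * \<Psi> js = \<sigma> * Dl j"
      unfolding \<sigma>_def using tD[symmetric] Dlpos[of js] by (simp add: field_simps)
    ultimately show ?thesis by linarith
  qed
  define pr where "pr = (\<lambda>v::real^'n. \<chi> i. if i \<in> I then xk $ i else v $ i)"
  have remeq: "f v - f xk - G \<bullet> (v - xk) = f (pr v) - f xk - G \<bullet> (pr v - xk)" for v
  proof -
    have "f1 v = f1 (pr v)" by (intro f1[rule_format]) (simp add: pr_def)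
    then have "f v - f (pr v) = (\<Sum>i\<in>I. f2 $ i * v $ i) - (\<Sum>i\<in>I. f2 $ i * (pr v) $ i)"
      using f2 by simp
    also have "\<dots> = (\<Sum>i\<in>I. f2 $ i * (v $ i - xk $ i))"
      by (simp add: pr_def sum_subtractf[symmetric] algebra_simps)
    also have "\<dots> = (\<Sum>i\<in>UNIV. if i \<in> I then G $ i * (v $ i - xk $ i) else 0)"
      using Gi by (simp add: sum.If_cases)
    also have "\<dots> = G \<bullet> (v - pr v)"
      unfolding inner_vec_def by (intro sum.cong) (auto simp: pr_def)
    finally show ?thesis by (simp add: inner_diff_right)
  qed
  define \<eta> where "\<eta> = (1 - \<rho>) * \<sigma> / (2 * C)"
  have \<eta>pos: "\<eta> > 0" unfolding \<eta>_def using pp \<sigma>pos Cpos by auto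
  obtain \<delta> where \<delta>: "\<delta> > 0" and
    rem: "\<And>v. norm (v - xk) < \<delta> \<Longrightarrow> norm (f v - f xk - G \<bullet> (v - xk)) \<le> \<eta> * norm (v - xk)"
    using der[unfolded has_derivative_within_alt] \<eta>pos by blast
  obtain n where n: "\<And>j. j \<ge> n \<Longrightarrow> Dl j < \<delta> / C" using small[of "\<delta> / C"] \<delta> Cpos by auto
  define j where "j = max n js"
  have jn: "j \<ge> n" "j \<ge> js" unfolding j_def by auto
  have npr: "norm (pr (y j) - xk) \<le> C * Dl j"
  proof -
    have "norm (pr (y j) - xk) \<le> C * pl_norm use_l1 I (pr (y j) - xk)"
      unfolding C_def by (rule norm_pl) (simp add: pr_def)
    also have "pl_norm use_l1 I (pr (y j) - xk) = pl_norm use_l1 I (y j - xk)"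
      by (rule pl_cong) (simp add: pr_def)
    finally show ?thesis using ypl[of j] Cpos by (meson mult_left_mono less_imp_le order_trans)
  qed
  have "C * Dl j < \<delta>" using n[OF jn(1)] Cpos by (simp add: field_simps)
  then have "norm (f (pr (y j)) - f xk - G \<bullet> (pr (y j) - xk)) \<le> \<eta> * norm (pr (y j) - xk)"
    using npr by (intro rem) linarith
  also have "\<dots> \<le> \<eta> * (C * Dl j)" using npr \<eta>pos by (simp add: mult_left_mono)
  also have "\<dots> = (1 - \<rho>) / 2 * (\<sigma> * Dl j)" unfolding \<eta>_def using Cpos by (simp add: field_simps)
  also have "\<dots> \<le> (1 - \<rho>) / 2 * \<Psi> j" using scale[OF jn(2)] pp by (simp add: mult_left_mono)
  finally have R0: "norm (f (pr (y j)) - f xk - G \<bullet> (pr (y j) - xk)) \<le> (1 - \<rho>) / 2 * \<Psi> j" .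
  have R: "\<bar>f (y j) - f xk - G \<bullet> (y j - xk)\<bar> \<le> (1 - \<rho>) / 2 * \<Psi> j"
    using R0 unfolding remeq[of "y j", symmetric] real_norm_def .
  have "G \<bullet> (y j - xk) = - \<Psi> j" unfolding \<Psi>_def by (simp add: inner_diff_right)
  then have "f xk - f (y j) \<ge> \<Psi> j - (1 - \<rho>) / 2 * \<Psi> j" using R by (simp only: abs_le_iff) linarith
  moreover have "\<Psi> j - (1 - \<rho>) / 2 * \<Psi> j \<ge> \<rho> * \<Psi> j"
    using H1[of j] pp by (simp add: field_simps)
  ultimately have "m k - f (y j) \<ge> \<rho> * \<Psi> j" using inv(2) by linarith
  then show False using H2[of j] by simp
qed


end
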